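(* Let $T\in\mathbb{R}^{M\times M}$ be symmetric positive definite, $D\in\mathbb{R}^{M\times M}$ diagonal with nonpositive diagonal entries, and $\omega>0$. Then every eigenvalue of $\mathcal{F}_\omega^{-1}\mathcal{R}$ lies in the closed disk in $\mathbb{C}$ of radius $\sigma(\omega)$ centered at $1$, where $$\sigma(\omega)=\max_{\lambda_i\in\lambda(D)}\left|\frac{\omega+\lambda_i}{\omega-\lambda_i}\right|\cdot\max_{\mu_i\in\lambda(T)}\sqrt{\frac{(\omega-\mu_i)^2+1}{(\omega+\mu_i)^2+1}}<1 .$$
   Context: Let $I$ denote the identity matrix of the appropriate size. Define the $2M\times 2M$ real block matrices $$\mathcal{R}=\begin{bmatrix}T-D & -I\\ I & T-D\end{bmatrix},\quad \mathcal{B}=\begin{bmatrix}-D&0\\0&-D\end{bmatrix},\quad \mathcal{H}=\begin{bmatrix}T&-I\\ I&T\end{bmatrix},$$ and for $\omega>0$, $\mathcal{F}_\omega=\tfrac{1}{2\omega}(\omega I+\mathcal{B})(\omega I+\mathcal{H})$. $\lambda(D)$, $\lambda(T)$ denote the sets of eigenvalues of $D$, $T$. *)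

theory Defs
  imports "HOL-Analysis.Analysis"
begin

text \<open>2x2 block matrix of M x M blocks, indexed by 'm + 'm
  (Inl = first block row/column, Inr = second).\<close>
definition block2 :: "real^'m^'m \<Rightarrow> real^'m^'m \<Rightarrow> real^'m^'m \<Rightarrow> real^'m^'m
    \<Rightarrow> real^('m + 'm)^('m + 'm)" where
  "block2 A B C E = (\<chi> i j. case i of
      Inl a \<Rightarrow> (case j of Inl b \<Rightarrow> A$a$b | Inr b \<Rightarrow> B$a$b)
    | Inr a \<Rightarrow> (case j of Inl b \<Rightarrow> C$a$b | Inr b \<Rightarrow> E$a$b))"

definition RR :: "real^'m^'m \<Rightarrow> real^'m^'m \<Rightarrow> real^('m + 'm)^('m + 'm)" where
  "RR T D = block2 (T - D) (- mat 1) (mat 1) (T - D)"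

definition BB :: "real^'m^'m \<Rightarrow> real^('m + 'm)^('m + 'm)" where
  "BB D = block2 (- D) 0 0 (- D)"

definition HH :: "real^'m^'m \<Rightarrow> real^('m + 'm)^('m + 'm)" where
  "HH T = block2 T (- mat 1) (mat 1) T"

definition FF :: "real \<Rightarrow> real^'m^'m \<Rightarrow> real^'m^'m \<Rightarrow> real^('m + 'm)^('m + 'm)" where
  "FF \<omega> T D = (1 / (2 * \<omega>)) *\<^sub>R ((\<omega> *\<^sub>R mat 1 + BB D) ** (\<omega> *\<^sub>R mat 1 + HH T))"

definition cmat :: "real^'n^'k \<Rightarrow> complex^'n^'k" where
  "cmat A = (\<chi> i j. complex_of_real (A$i$j))"

definition complex_eigenvalue :: "real^'n^'n \<Rightarrow> complex \<Rightarrow> bool" where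
  "complex_eigenvalue A z \<longleftrightarrow> (\<exists>v::complex^'n. v \<noteq> 0 \<and> cmat A *v v = z *s v)"

definition real_eigenvalues :: "real^'n^'n \<Rightarrow> real set" where
  "real_eigenvalues A = {\<mu>. \<exists>v::real^'n. v \<noteq> 0 \<and> A *v v = \<mu> *s v}"

definition sigma :: "real \<Rightarrow> real^'m^'m \<Rightarrow> real^'m^'m \<Rightarrow> real" where
  "sigma \<omega> T D =
     Max ((\<lambda>l. \<bar>(\<omega> + l) / (\<omega> - l)\<bar>) ` {D$i$i | i. True})
   * Max ((\<lambda>\<mu>. sqrt (((\<omega> - \<mu>)^2 + 1) / ((\<omega> + \<mu>)^2 + 1))) ` real_eigenvalues T)"

end

theory Submission
  imports Defs
begin

lemma sym_inner:
  fixes T :: "real^'m^'m"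
  assumes "transpose T = T"
  shows "inner x (T *v y) = inner (T *v x) y"
  by (metis assms dot_lmul_matrix transpose_matrix_vector)

definition Aq :: "real \<Rightarrow> real^'m^'m \<Rightarrow> real^'m \<Rightarrow> real" where
  "Aq w T x = (w^2+1) * inner x x - 2*w*inner x (T *v x) + inner (T *v x) (T *v x)"
definition Bq :: "real \<Rightarrow> real^'m^'m \<Rightarrow> real^'m \<Rightarrow> real" where
  "Bq w T x = (w^2+1) * inner x x + 2*w*inner x (T *v x) + inner (T *v x) (T *v x)"

lemma Aq_scale: "Aq w T (t *\<^sub>R x) = t^2 * Aq w T x"
  by (simp add: Aq_def matrix_vector_mult_scaleR algebra_simps power2_eq_square)
lemma Bq_scale: "Bq w T (t *\<^sub>R x) = t^2 * Bq w T x"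
  by (simp add: Bq_def matrix_vector_mult_scaleR algebra_simps power2_eq_square)

lemma Bq_pos:
  assumes "\<forall>x. x \<noteq> 0 \<longrightarrow> x \<bullet> (T *v x) > 0" "w > 0" "x \<noteq> 0"
  shows "Bq w T x > 0" "Aq w T x < Bq w T x"
proof -
  have "x \<bullet> (T *v x) > 0" using assms by auto
  moreover have "inner x x > 0" using assms by simp
  moreover have "inner (T *v x) (T *v x) \<ge> 0" by simp
  ultimately show "Bq w T x > 0" "Aq w T x < Bq w T x" using assms(2)
    by (auto simp: Bq_def Aq_def intro!: add_pos_nonneg add_pos_pos mult_pos_pos)
qed

lemma cont_test: "continuous_on S (\<lambda>x::real^'m. Aq w T x / Bq w T x)" if "\<forall>x\<in>S. Bq w T x \<noteq> 0"
  unfolding Aq_def Bq_def using that[unfolded Bq_def]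
  by (intro continuous_intros) auto


lemma max_ratio:
  fixes T :: "real^'m^'m"
  assumes pd: "\<forall>x. x \<noteq> 0 \<longrightarrow> x \<bullet> (T *v x) > 0" and w: "w > 0"
  obtains x0 c where "x0 \<noteq> 0" "Aq w T x0 = c * Bq w T x0" "\<And>x. Aq w T x \<le> c * Bq w T x" "c < 1"
proof -
  let ?S = "sphere (0::real^'m) 1"
  have ne: "?S \<noteq> {}" using vector_choose_size[of 1] by auto
  have Bnz: "\<forall>x\<in>?S. Bq w T x \<noteq> 0" using Bq_pos[OF pd w] by (metis less_irrefl mem_sphere_0 norm_zero zero_neq_one)
  obtain x0 where x0: "x0 \<in> ?S" and mx: "\<And>y. y \<in> ?S \<Longrightarrow> Aq w T y / Bq w T y \<le> Aq w T x0 / Bq w T x0"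
    using continuous_attains_sup[OF compact_sphere ne cont_test[OF Bnz]] by blast
  define c where "c = Aq w T x0 / Bq w T x0"
  have x0nz: "x0 \<noteq> 0" using x0 by auto
  have B0: "Bq w T x0 > 0" using Bq_pos[OF pd w x0nz] by simp
  have eq: "Aq w T x0 = c * Bq w T x0" using B0 by (simp add: c_def)
  have c1: "c < 1" using Bq_pos[OF pd w x0nz] by (simp add: c_def)
  have all: "Aq w T x \<le> c * Bq w T x" for x
  proof (cases "x = 0")
    case True then show ?thesis by (simp add: Aq_def Bq_def)
  next
    case False
    let ?u = "(1 / norm x) *\<^sub>R x"
    have "?u \<in> ?S" using False by simp
    then have "Aq w T ?u / Bq w T ?u \<le> c" using mx c_def by auto
    moreover have "Bq w T ?u > 0" using Bq_pos[OF pd w] False by simp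
    ultimately have "Aq w T ?u \<le> c * Bq w T ?u" by (simp add: divide_le_eq)
    then have "(1/norm x)^2 * Aq w T x \<le> (1/norm x)^2 * (c * Bq w T x)"
      by (simp add: Aq_scale Bq_scale algebra_simps)
    moreover have "(1/norm x)^2 > 0" using False by simp
    ultimately show ?thesis by (simp add: mult_le_cancel_left_pos)
  qed
  show ?thesis using that x0nz eq all c1 by blast
qed

lemma eig_exists:
  fixes T :: "real^'m^'m"
  assumes sym: "transpose T = T" and pd: "\<forall>x. x \<noteq> 0 \<longrightarrow> x \<bullet> (T *v x) > 0" and w: "w > 0"
    and x0nz: "x0 \<noteq> 0" and eq: "Aq w T x0 = c * Bq w T x0" and all: "\<And>x. Aq w T x \<le> c * Bq w T x"
    and c1: "c < 1"
  shows "\<exists>r \<in> real_eigenvalues T. (w - r)^2 + 1 = c * ((w + r)^2 + 1)"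
proof -
  define a where "a = 1 - c"
  define b where "b = -2*w*(1+c)"
  define k where "k = (1-c)*(w^2+1)"
  have a0: "a > 0" using c1 by (simp add: a_def)
  define P where "P x = k *\<^sub>R x + b *\<^sub>R (T *v x) + a *\<^sub>R (T *v (T *v x))" for x
  have TT: "inner (T *v x) (T *v y) = inner x (T *v (T *v y))" for x y
    using sym_inner[OF sym] by metis
  have Q: "inner x (P x) = Aq w T x - c * Bq w T x" for x
    by (simp add: P_def Aq_def Bq_def TT inner_add_right a_def b_def k_def algebra_simps)
  have Plin: "P (x + t *\<^sub>R y) = P x + t *\<^sub>R P y" for x y t
    by (simp add: P_def matrix_vector_right_distrib algebra_simps)
  have Psym: "inner y (P x) = inner x (P y)" for x y
  proof -
    have h1: "inner y (T *v x) = inner x (T *v y)"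
      by (metis sym_inner[OF sym] inner_commute)
    have h2: "inner y (T *v (T *v x)) = inner x (T *v (T *v y))"
      by (metis TT inner_commute)
    show ?thesis by (simp add: P_def inner_add_right h1 h2 inner_commute[of y x])
  qed
  have Qle: "inner x (P x) \<le> 0" for x using all[of x] Q[of x] by simp
  have Q0: "inner x0 (P x0) = 0" using Q eq by simp
  define v where "v = P x0"
  define n where "n = inner v v"
  define q where "q = - inner v (P v)"
  have q0: "q \<ge> 0" using Qle[of v] by (simp add: q_def)
  have expand: "inner (x0 + t *\<^sub>R v) (P (x0 + t *\<^sub>R v)) = 2 * t * n - t^2 * q" for t
    using Psym[of x0 v] Q0
    by (simp add: Plin inner_add_left inner_add_right n_def q_def v_def power2_eq_square algebra_simps)
  have tineq: "2 * t * n \<le> t^2 * q" for t using Qle[of "x0 + t *\<^sub>R v"] expand[of t] by simp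
  have "n = 0"
  proof (rule ccontr)
    assume "n \<noteq> 0"
    then have npos: "n > 0" using n_def by simp
    define t where "t = n / (q + 1)"
    have tpos: "t > 0" using npos q0 by (simp add: t_def)
    have "2 * t * n \<le> t * (t * q)" using tineq[of t] by (simp add: power2_eq_square algebra_simps)
    then have "2 * n \<le> t * q" using tpos by (simp add: mult.assoc)
    moreover have "t * q < n" using npos q0 by (simp add: t_def field_simps)
    ultimately show False using npos by linarith
  qed
  then have Px0: "P x0 = 0" by (simp add: n_def v_def)
  show ?thesis
  proof (cases "b^2 - 4*a*k < 0")
    case True
    define y where "y = T *v x0 + (b/(2*a)) *\<^sub>R x0"
    have "inner x0 (P x0) = a * inner y y + (k - b^2/(4*a)) * inner x0 x0"
      using a0 by (simp add: P_def y_def inner_add_left inner_add_right TT inner_commute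
           power2_eq_square field_simps)
    moreover have "k - b^2/(4*a) > 0" using True a0 by (simp add: field_simps)
    moreover have "inner x0 x0 > 0" using x0nz by simp
    moreover have "inner y y \<ge> 0" by simp
    ultimately have "inner x0 (P x0) > 0" using a0
      by (metis add_nonneg_pos mult_nonneg_nonneg mult_pos_pos less_imp_le)
    then show ?thesis using Px0 by simp
  next
    case False
    define r2 where "r2 = (-b + sqrt (b^2 - 4*a*k)) / (2*a)"
    define r1 where "r1 = -b/a - r2"
    have sq: "sqrt (b^2 - 4*a*k) ^2 = b^2 - 4*a*k" using False by simp
    have p2: "a * r2^2 + b * r2 + k = 0"
      unfolding r2_def using a0 sq by (simp add: field_simps power2_eq_square)
    have ar1: "a * r1 = -b - a * r2" using a0 by (simp add: r1_def field_simps)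
    have p1: "a * r1^2 + b * r1 + k = 0"
      using p2 ar1 by algebra
    have prod: "a * (r1 * r2) = k" using p2 ar1 by algebra
    have sum: "a * (r1 + r2) = -b" using a0 by (simp add: r1_def field_simps)
    define y where "y = T *v x0 - r2 *\<^sub>R x0"
    have Pf: "P x0 = a *\<^sub>R (T *v y - r1 *\<^sub>R y)"
    proof -
      have "a *\<^sub>R (T *v y - r1 *\<^sub>R y) = a *\<^sub>R (T *v (T *v x0)) - (a*(r1+r2)) *\<^sub>R (T *v x0) + (a*(r1*r2)) *\<^sub>R x0"
        by (simp add: y_def matrix_vector_mult_diff_distrib algebra_simps)
      also have "\<dots> = P x0" using sum prod by (simp add: P_def algebra_simps)
      finally show ?thesis by simp
    qed
    have "\<exists>r. (r = r1 \<or> r = r2) \<and> r \<in> real_eigenvalues T"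
    proof (cases "y = 0")
      case True
      then have "T *v x0 = r2 *s x0" by (simp add: y_def scalar_mult_eq_scaleR)
      then show ?thesis using x0nz unfolding real_eigenvalues_def by blast
    next
      case False
      have "T *v y = r1 *s y" using Pf Px0 a0 by (simp add: scalar_mult_eq_scaleR)
      then show ?thesis using False unfolding real_eigenvalues_def by blast
    qed
    then obtain r where r: "r = r1 \<or> r = r2" "r \<in> real_eigenvalues T" by blast
    have pr: "a * r^2 + b * r + k = 0" using r p1 p2 by auto
    have "(w - r)^2 + 1 = c * ((w + r)^2 + 1)"
      using pr by (simp add: a_def b_def k_def power2_eq_square algebra_simps)
    then show ?thesis using r by blast
  qed
qed

definition lft :: "real^('m+'m) \<Rightarrow> real^'m" where "lft y = (\<chi> k. y $ Inl k)"
definition rgt :: "real^('m+'m) \<Rightarrow> real^'m" where "rgt y = (\<chi> k. y $ Inr k)"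

lemma sum_sumtype:
  "sum f (UNIV::('a::finite+'b::finite) set) = sum (\<lambda>k. f (Inl k)) UNIV + sum (\<lambda>k. f (Inr k)) UNIV"
proof -
  have "sum f (UNIV::('a+'b) set) = sum f (UNIV <+> UNIV)" by (simp only: UNIV_Plus_UNIV)
  also have "\<dots> = sum (f \<circ> Inl) UNIV + sum (f \<circ> Inr) UNIV" by (rule sum.Plus) auto
  finally show ?thesis by (simp add: comp_def)
qed

lemma block_mv:
  "lft (block2 A B C E *v y) = A *v lft y + B *v rgt y"
  "rgt (block2 A B C E *v y) = C *v lft y + E *v rgt y"
  by (simp_all add: vec_eq_iff lft_def rgt_def block2_def matrix_vector_mult_def sum_sumtype)

lemma vec_eq_lr: "y = y' \<longleftrightarrow> lft y = lft y' \<and> rgt y = rgt y'"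
  apply (auto simp: vec_eq_iff lft_def rgt_def)
  by (metis sum.exhaust)

lemma lr_ops[simp]:
  "lft (y + y') = lft y + lft y'" "rgt (y + y') = rgt y + rgt y'"
  "lft (y - y') = lft y - lft y'" "rgt (y - y') = rgt y - rgt y'"
  "lft (c *\<^sub>R y) = c *\<^sub>R lft y" "rgt (c *\<^sub>R y) = c *\<^sub>R rgt y"
  "lft 0 = 0" "rgt 0 = 0"
  by (simp_all add: vec_eq_iff lft_def rgt_def)

lemma inner_lr: "inner y y' = inner (lft y) (lft y') + inner (rgt y) (rgt y')"
  by (simp add: inner_vec_def sum_sumtype lft_def rgt_def)

lemma mv_neg: "(- A) *v x = - (A *v (x::real^'n))"
  by (simp add: vec_eq_iff matrix_vector_mult_def sum_negf)

lemma HH_mv: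
  "lft (HH T *v y) = T *v lft y - rgt y" "rgt (HH T *v y) = lft y + T *v rgt y"
  by (simp_all add: HH_def block_mv mv_neg)

lemma mat1_mv_lr: "lft (mat 1 *v y) = lft y" "rgt (mat 1 *v y) = rgt y" by simp_all

lemma RR_eq: "RR T D = BB D + HH T"
  by (auto simp: vec_eq_iff RR_def BB_def HH_def block2_def split: sum.splits)

definition dd :: "real^'m^'m \<Rightarrow> 'm + 'm \<Rightarrow> real" where
  "dd D = case_sum (\<lambda>k. D$k$k) (\<lambda>k. D$k$k)"

lemma BB_mv:
  assumes "\<forall>i j. i \<noteq> j \<longrightarrow> D$i$j = 0"
  shows "(BB D *v y) $ i = - dd D i * y $ i"
proof -
  have d: "(\<Sum>l\<in>UNIV. D $ k $ l * f l) = D$k$k * f k" for k and f :: "'a \<Rightarrow> real"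
    using assms by (subst sum.remove[of _ k]) (auto intro!: sum.neutral)
  show ?thesis
    by (cases i) (simp_all add: BB_def block2_def matrix_vector_mult_def sum_sumtype dd_def sum_negf d)
qed

lemma scaleR_mv: "(k *\<^sub>R A) *v v = k *\<^sub>R (A *v (v::real^'n))"
  by (simp add: scaleR_matrix_vector_assoc)

lemma G_mv:
  assumes "\<forall>i j. i \<noteq> j \<longrightarrow> D$i$j = 0"
  shows "((w *\<^sub>R mat 1 + BB D) *v y) $ i = (w - dd D i) * y $ i"
    "((w *\<^sub>R mat 1 - BB D) *v y) $ i = (w + dd D i) * y $ i"
  by (simp_all add: matrix_vector_mult_add_rdistrib matrix_vector_mult_diff_rdistrib scaleR_mv BB_mv[OF assms] algebra_simps)

lemma K_lr:
  "lft ((w *\<^sub>R mat 1 + HH T) *v y) = w *\<^sub>R lft y + (T *v lft y - rgt y)"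
  "rgt ((w *\<^sub>R mat 1 + HH T) *v y) = w *\<^sub>R rgt y + (lft y + T *v rgt y)"
  "lft ((w *\<^sub>R mat 1 - HH T) *v y) = w *\<^sub>R lft y - (T *v lft y - rgt y)"
  "rgt ((w *\<^sub>R mat 1 - HH T) *v y) = w *\<^sub>R rgt y - (lft y + T *v rgt y)"
  by (simp_all add: matrix_vector_mult_add_rdistrib matrix_vector_mult_diff_rdistrib scaleR_mv HH_mv)

lemma K_norms:
  fixes T :: "real^'m^'m"
  assumes sym: "transpose T = T"
  shows "inner ((w *\<^sub>R mat 1 - HH T) *v y) ((w *\<^sub>R mat 1 - HH T) *v y) = Aq w T (lft y) + Aq w T (rgt y)"
    "inner ((w *\<^sub>R mat 1 + HH T) *v y) ((w *\<^sub>R mat 1 + HH T) *v y) = Bq w T (lft y) + Bq w T (rgt y)"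
proof -
  define a where "a = lft y"
  define b where "b = rgt y"
  have s1: "inner (T *v a) b = inner a (T *v b)" using sym_inner[OF sym] by metis
  have s2: "inner b (T *v a) = inner a (T *v b)" using sym_inner[OF sym] by (metis inner_commute)
  have s3: "inner (T *v b) a = inner a (T *v b)" using sym_inner[OF sym] by (metis inner_commute)
  have s4: "inner b a = inner a b" by (rule inner_commute)
  have s5: "inner (T *v a) a = inner a (T *v a)" "inner (T *v b) b = inner b (T *v b)" by (simp_all add: inner_commute)
  show "inner ((w *\<^sub>R mat 1 - HH T) *v y) ((w *\<^sub>R mat 1 - HH T) *v y) = Aq w T (lft y) + Aq w T (rgt y)"
    unfolding inner_lr[of "(w *\<^sub>R mat 1 - HH T) *v y"] K_lr a_def[symmetric] b_def[symmetric]
    by (simp add: Aq_def inner_add_left inner_add_right inner_diff_left inner_diff_right s1 s2 s3 s4 s5 power2_eq_square algebra_simps)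
  show "inner ((w *\<^sub>R mat 1 + HH T) *v y) ((w *\<^sub>R mat 1 + HH T) *v y) = Bq w T (lft y) + Bq w T (rgt y)"
    unfolding inner_lr[of "(w *\<^sub>R mat 1 + HH T) *v y"] K_lr a_def[symmetric] b_def[symmetric]
    by (simp add: Bq_def inner_add_left inner_add_right inner_diff_left inner_diff_right s1 s2 s3 s4 s5 power2_eq_square algebra_simps)
qed

lemma FF_mv: "w > 0 \<Longrightarrow> FF w T D *v y = (1/(2*w)) *\<^sub>R ((w *\<^sub>R mat 1 + BB D) *v ((w *\<^sub>R mat 1 + HH T) *v y))"
  by (simp add: FF_def scaleR_mv matrix_vector_mul_assoc)

lemma two_vec: "(2::real^'n) * v = 2 *\<^sub>R v" by (simp add: vec_eq_iff)

lemma diff_ident: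
  "(w *\<^sub>R mat 1 + BB D) *v ((w *\<^sub>R mat 1 + HH T) *v y) - (w *\<^sub>R mat 1 - BB D) *v ((w *\<^sub>R mat 1 - HH T) *v y)
   = (2*w) *\<^sub>R (RR T D *v y)"
  by (simp add: RR_eq matrix_vector_mult_add_rdistrib matrix_vector_mult_diff_rdistrib scaleR_mv
      matrix_vector_right_distrib matrix_vector_mult_diff_distrib matrix_vector_mult_scaleR algebra_simps)
    (simp add: two_vec scaleR_add_right)

definition cv :: "real^'n \<Rightarrow> real^'n \<Rightarrow> complex^'n" where "cv p q = (\<chi> i. Complex (p$i) (q$i))"
definition cre :: "complex^'n \<Rightarrow> real^'n" where "cre v = (\<chi> i. Re (v$i))"
definition cim :: "complex^'n \<Rightarrow> real^'n" where "cim v = (\<chi> i. Im (v$i))"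

lemma cv_re_im: "cv (cre v) (cim v) = v"
  by (simp add: vec_eq_iff cv_def cre_def cim_def complex_eq_iff)

lemma cmat_cv: "cmat A *v cv p q = cv (A *v p) (A *v q)"
  by (simp add: vec_eq_iff cv_def cmat_def matrix_vector_mult_def complex_eq_iff Re_sum Im_sum)

lemma cv_scal: "z *s cv p q = cv (Re z *\<^sub>R p - Im z *\<^sub>R q) (Im z *\<^sub>R p + Re z *\<^sub>R q)"
  by (simp add: vec_eq_iff cv_def complex_eq_iff)

lemma cv_eq: "cv p q = cv p' q' \<longleftrightarrow> p = p' \<and> q = q'"
  by (auto simp: vec_eq_iff cv_def complex_eq_iff)

lemma cv_nth: "cv p q $ i = Complex (p$i) (q$i)" by (simp add: cv_def)

lemma inner_cv: "inner (cv p q) (cv p q) = inner p p + inner q q"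
  by (simp add: inner_vec_def cv_def inner_complex_def sum.distrib)

lemma cmat_mult: "cmat (A ** B) = cmat A ** cmat B"
  by (simp add: vec_eq_iff cmat_def matrix_matrix_mult_def)

lemma cmv_scal: "(A::complex^'n^'m) *v (z *s v) = z *s (A *v v)"
  by (simp add: vec_eq_iff matrix_vector_mult_def sum_distrib_left mult_ac)

lemma eig_real:
  fixes F R :: "real^'n^'n"
  assumes inv: "invertible F" and ev: "complex_eigenvalue (matrix_inv F ** R) z"
  obtains p q where "p \<noteq> 0 \<or> q \<noteq> 0" "cv (R *v p) (R *v q) = z *s cv (F *v p) (F *v q)"
proof -
  obtain v where v0: "v \<noteq> 0" and ev': "cmat (matrix_inv F ** R) *v v = z *s v"
    using ev unfolding complex_eigenvalue_def by blast
  have FF: "F ** matrix_inv F = mat 1"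
    using inv unfolding invertible_def matrix_inv_def by (rule someI2_ex) auto
  have "cmat R *v v = cmat F *v (cmat (matrix_inv F ** R) *v v)"
    by (simp add: matrix_vector_mul_assoc cmat_mult[symmetric] matrix_mul_assoc FF)
  also have "\<dots> = z *s (cmat F *v v)" by (simp add: ev' cmv_scal)
  finally have e: "cmat R *v v = z *s (cmat F *v v)" .
  define p where "p = cre v"
  define q where "q = cim v"
  have vv: "v = cv p q" by (simp add: p_def q_def cv_re_im)
  have "p \<noteq> 0 \<or> q \<noteq> 0" using v0 vv by (auto simp: cv_def vec_eq_iff complex_eq_iff)
  moreover have "cv (R *v p) (R *v q) = z *s cv (F *v p) (F *v q)" using e vv by (simp add: cmat_cv)
  ultimately show ?thesis using that by blast
qed

lemma eig_pos:
  fixes T :: "real^'m^'m"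
  assumes pd: "\<forall>x. x \<noteq> 0 \<longrightarrow> x \<bullet> (T *v x) > 0" and "\<mu> \<in> real_eigenvalues T"
  shows "\<mu> > 0"
proof -
  obtain v where v: "v \<noteq> 0" "T *v v = \<mu> *s v" using assms(2) unfolding real_eigenvalues_def by blast
  have "v \<bullet> (T *v v) = \<mu> * (v \<bullet> v)" using v by (simp add: scalar_mult_eq_scaleR)
  moreover have "v \<bullet> v > 0" using v by simp
  moreover have "v \<bullet> (T *v v) > 0" using pd v by auto
  ultimately show ?thesis by (metis zero_less_mult_pos2)
qed

lemma eig_finite:
  fixes T :: "real^'m^'m"
  assumes sym: "transpose T = T"
  shows "finite (real_eigenvalues T)"
proof -
  define E where "E = real_eigenvalues T"
  define ev where "ev \<mu> = (SOME v. v \<noteq> 0 \<and> T *v v = \<mu> *s v)" for \<mu>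
  have evp: "ev \<mu> \<noteq> 0 \<and> T *v ev \<mu> = \<mu> *s ev \<mu>" if "\<mu> \<in> E" for \<mu>
    using that unfolding E_def real_eigenvalues_def ev_def by (rule CollectE) (rule someI_ex)
  have inj: "inj_on ev E"
  proof (rule inj_onI)
    fix a b assume a: "a \<in> E" and b: "b \<in> E" and e: "ev a = ev b"
    have "a *s ev a = T *v ev a" using evp[OF a] by simp
    also have "\<dots> = T *v ev b" using e by simp
    also have "\<dots> = b *s ev b" using evp[OF b] by simp
    also have "\<dots> = b *s ev a" using e by simp
    finally have "a *s ev a = b *s ev a" .
    then have "(a - b) *s ev a = 0" by (simp add: vector_sub_rdistrib)
    then show "a = b" using evp[OF a] by (simp add: scalar_mult_eq_scaleR)
  qed
  have orth: "pairwise orthogonal (ev ` E)"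
  proof (clarsimp simp: pairwise_def)
    fix a b assume a: "a \<in> E" and b: "b \<in> E" and ne: "ev a \<noteq> ev b"
    have "a \<noteq> b" using ne by auto
    have "a * (ev a \<bullet> ev b) = (T *v ev a) \<bullet> ev b" using evp[OF a] by (simp add: scalar_mult_eq_scaleR)
    also have "\<dots> = ev a \<bullet> (T *v ev b)" using sym_inner[OF sym] by metis
    also have "\<dots> = b * (ev a \<bullet> ev b)" using evp[OF b] by (simp add: scalar_mult_eq_scaleR)
    finally show "orthogonal (ev a) (ev b)" using \<open>a \<noteq> b\<close> by (simp add: orthogonal_def)
  qed
  have "0 \<notin> ev ` E" using evp by (metis imageE)
  then have "independent (ev ` E)" using pairwise_orthogonal_independent orth by blast
  then have "finite (ev ` E)" using independent_bound by blast
  then show ?thesis using finite_imageD inj E_def by blast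
qed

lemma inner_cnorm: "inner (u::complex^'n) u = (\<Sum>i\<in>UNIV. (cmod (u$i))^2)"
  by (simp add: inner_vec_def power2_norm_eq_inner)

lemma Bq_nonneg:
  assumes "\<forall>x. x \<noteq> 0 \<longrightarrow> x \<bullet> (T *v x) > 0" "w > 0"
  shows "Bq w T x \<ge> 0"
  using Bq_pos[OF assms, of x] by (cases "x = 0") (auto simp: Bq_def)

theorem theorem3:
  fixes T D :: "real^'m^'m" and \<omega> :: real
  assumes T_sym: "transpose T = T"
    and T_pd: "\<forall>x. x \<noteq> 0 \<longrightarrow> x \<bullet> (T *v x) > 0"
    and D_diag: "\<forall>i j. i \<noteq> j \<longrightarrow> D$i$j = 0"
    and D_nonpos: "\<forall>i. D$i$i \<le> 0"
    and \<omega>_pos: "\<omega> > 0"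
  shows "(\<forall>z. complex_eigenvalue (matrix_inv (FF \<omega> T D) ** RR T D) z
              \<longrightarrow> cmod (z - 1) \<le> sigma \<omega> T D)
         \<and> sigma \<omega> T D < 1"
proof -
  define w where "w = \<omega>"
  have w: "w > 0" using \<omega>_pos w_def by simp
  define G where "G = w *\<^sub>R mat 1 + BB D"
  define Gm where "Gm = w *\<^sub>R mat 1 - BB D"
  define Kp where "Kp = w *\<^sub>R mat 1 + HH T"
  define Km where "Km = w *\<^sub>R mat 1 - HH T"
  define F where "F = FF w T D"
  define R where "R = RR T D"
  define E where "E = real_eigenvalues T"
  define g where "g \<mu> = ((w - \<mu>)^2 + 1) / ((w + \<mu>)^2 + 1)" for \<mu>
  define DS where "DS = {D$i$i | i. True}"
  define \<alpha> where "\<alpha> = Max ((\<lambda>l. \<bar>(w + l) / (w - l)\<bar>) ` DS)"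
  define \<beta> where "\<beta> = Max ((\<lambda>\<mu>. sqrt (g \<mu>)) ` E)"
  have sig: "sigma \<omega> T D = \<alpha> * \<beta>"
    by (simp add: sigma_def \<alpha>_def \<beta>_def DS_def E_def g_def w_def)
  obtain x0 c where x0: "x0 \<noteq> 0" "Aq w T x0 = c * Bq w T x0" and allc: "\<And>x. Aq w T x \<le> c * Bq w T x" and c1: "c < 1"
    using max_ratio[OF T_pd w] by blast
  obtain r where rE: "r \<in> E" and rc: "(w - r)^2 + 1 = c * ((w + r)^2 + 1)"
    using eig_exists[OF T_sym T_pd w x0 allc c1] E_def by blast
  have den: "(w + \<mu>)^2 + 1 > 0" for \<mu> by (metis add_nonneg_pos zero_le_power2 zero_less_one)
  have gr: "g r = c" using rc den[of r] by (simp add: g_def field_simps)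
  have finE: "finite E" using eig_finite[OF T_sym] E_def by simp
  have Epos: "\<mu> > 0" if "\<mu> \<in> E" for \<mu> using eig_pos[OF T_pd] that E_def by simp
  have g0: "g \<mu> \<ge> 0" for \<mu> using den[of \<mu>] by (simp add: g_def)
  have g1: "g \<mu> < 1" if "\<mu> > 0" for \<mu>
  proof -
    have "(w - \<mu>)^2 < (w + \<mu>)^2" using that w by (simp add: power2_eq_square algebra_simps)
    then show ?thesis using den[of \<mu>] by (simp add: g_def)
  qed
  have \<beta>ge: "sqrt (g \<mu>) \<le> \<beta>" if "\<mu> \<in> E" for \<mu>
    unfolding \<beta>_def using finE that by (intro Max_ge) auto
  have \<beta>lt: "\<beta> < 1"
  proof -
    have "\<beta> \<in> (\<lambda>\<mu>. sqrt (g \<mu>)) ` E" unfolding \<beta>_def using finE rE by (intro Max_in) auto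
    then obtain \<mu> where "\<mu> \<in> E" "\<beta> = sqrt (g \<mu>)" by blast
    then show ?thesis using g1[OF Epos] by simp
  qed
  have \<beta>0: "\<beta> \<ge> 0" using \<beta>ge[OF rE] by (meson order_trans real_sqrt_ge_zero g0)
  have c\<beta>: "c \<le> \<beta>^2"
  proof -
    have "sqrt c \<le> \<beta>" using \<beta>ge[OF rE] gr by simp
    then have "(sqrt c)^2 \<le> \<beta>^2" using power_mono by (metis real_sqrt_ge_zero g0 gr)
    moreover have "c \<ge> 0" using g0[of r] gr by simp
    ultimately show ?thesis by simp
  qed
  have DSr: "DS = range (\<lambda>i. D$i$i)" by (auto simp: DS_def)
  have finDS: "finite DS" unfolding DSr by simp
  have ddDS: "dd D i \<in> DS" for i by (cases i) (auto simp: dd_def DS_def)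
  have dd0: "dd D i \<le> 0" for i using D_nonpos by (cases i) (auto simp: dd_def)
  have \<alpha>ge: "\<bar>(w + dd D i) / (w - dd D i)\<bar> \<le> \<alpha>" for i
    unfolding \<alpha>_def by (rule Max_ge) (use finDS ddDS[of i] in auto)
  have ratio1: "\<bar>(w + l) / (w - l)\<bar> \<le> 1" if "l \<le> 0" for l
  proof -
    have p: "w - l > 0" using w that by linarith
    have "\<bar>w + l\<bar> \<le> w - l" unfolding abs_le_iff using w that by linarith
    then have "\<bar>w + l\<bar> / (w - l) \<le> 1" using p by (simp add: divide_le_eq_1_pos)
    then show ?thesis using p by (simp add: abs_divide)
  qed
  have \<alpha>1: "\<alpha> \<le> 1"
  proof -
    have "\<alpha> \<in> (\<lambda>l. \<bar>(w + l) / (w - l)\<bar>) ` DS" unfolding \<alpha>_def using finDS ddDS by (intro Max_in) auto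
    then obtain l where "l \<in> DS" "\<alpha> = \<bar>(w + l) / (w - l)\<bar>" by blast
    moreover have "l \<le> 0" using \<open>l \<in> DS\<close> D_nonpos by (auto simp: DS_def)
    ultimately show ?thesis using ratio1 by simp
  qed
  have \<alpha>0: "\<alpha> \<ge> 0" using \<alpha>ge[of undefined] by (meson abs_ge_zero order_trans)
  have sig1: "sigma \<omega> T D < 1"
  proof -
    have "\<alpha> * \<beta> \<le> 1 * \<beta>" using \<alpha>1 \<beta>0 by (intro mult_right_mono) auto
    then show ?thesis using \<beta>lt sig by simp
  qed
  have Kmb: "inner (Km *v y) (Km *v y) \<le> c * inner (Kp *v y) (Kp *v y)" for y
    using allc[of "lft y"] allc[of "rgt y"] unfolding Km_def Kp_def K_norms[OF T_sym]
    by (simp add: distrib_left)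
  have Kpos: "inner (Kp *v y) (Kp *v y) > 0" if "y \<noteq> 0" for y
  proof -
    have "lft y \<noteq> 0 \<or> rgt y \<noteq> 0" using that vec_eq_lr[of y 0] by auto
    then have "Bq w T (lft y) + Bq w T (rgt y) > 0"
      using Bq_pos(1)[OF T_pd w] Bq_nonneg[OF T_pd w] by (metis add_nonneg_pos add_pos_nonneg)
    then show ?thesis unfolding Kp_def K_norms[OF T_sym] .
  qed
  have fF: "G *v (Kp *v y) = (2*w) *\<^sub>R (F *v y)" for y
    using w by (simp add: F_def FF_mv G_def Kp_def)
  have fD: "Gm *v (Km *v y) = (2*w) *\<^sub>R (F *v y - R *v y)" for y
  proof -
    have "G *v (Kp *v y) - Gm *v (Km *v y) = (2*w) *\<^sub>R (R *v y)"
      unfolding G_def Kp_def Gm_def Km_def R_def by (rule diff_ident)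
    then show ?thesis using fF[of y] by (simp add: algebra_simps)
  qed
  have fG: "(G *v v) $ i = (w - dd D i) * v $ i" for v i unfolding G_def by (rule G_mv(1)[OF D_diag])
  have fGm: "(Gm *v v) $ i = (w + dd D i) * v $ i" for v i unfolding Gm_def by (rule G_mv(2)[OF D_diag])
  have e1: "(w - dd D i) * (Kp *v y) $ i = 2*w * (F *v y) $ i" for y i
    using arg_cong[OF fF[of y], of "\<lambda>v. v $ i"] unfolding fG by simp
  have e2: "(w + dd D i) * (Km *v y) $ i = 2*w * ((F *v y) $ i - (R *v y) $ i)" for y i
    using arg_cong[OF fD[of y], of "\<lambda>v. v $ i"] unfolding fGm by simp
  have Finj: "y = 0" if "F *v y = 0" for y
  proof -
    have "(Kp *v y) $ i = 0" for i
    proof -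
      have "w - dd D i \<noteq> 0" using w dd0[of i] by simp
      moreover have "(w - dd D i) * (Kp *v y) $ i = 0" using e1[of i y] that by simp
      ultimately show ?thesis by simp
    qed
    then have "Kp *v y = 0" by (simp add: vec_eq_iff)
    then show ?thesis by (rule_tac ccontr) (use Kpos[of y] in simp)
  qed
  have invF: "invertible F"
    unfolding invertible_left_inverse matrix_left_invertible_ker using Finj by blast
  have eig: "cmod (z - 1) \<le> sigma \<omega> T D" if ev: "complex_eigenvalue (matrix_inv F ** R) z" for z
  proof -
    obtain p q where pq: "p \<noteq> 0 \<or> q \<noteq> 0" and evr: "cv (R *v p) (R *v q) = z *s cv (F *v p) (F *v q)"
      using eig_real[OF invF ev] by blast
    define U where "U = cv (Kp *v p) (Kp *v q)"
    define X where "X = cv (Km *v p) (Km *v q)"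
    have comp: "cmod (z - 1) * cmod (U $ i) \<le> \<alpha> * cmod (X $ i)" for i
    proof -
      define Fi where "Fi = Complex ((F *v p) $ i) ((F *v q) $ i)"
      define Ri where "Ri = Complex ((R *v p) $ i) ((R *v q) $ i)"
      have Ri: "Ri = z * Fi" using arg_cong[OF evr, of "\<lambda>v. v $ i"] by (simp add: Ri_def Fi_def cv_nth)
      have u: "of_real (w - dd D i) * U $ i = of_real (2*w) * Fi"
        using e1[of i p] e1[of i q] by (simp add: U_def Fi_def cv_nth complex_eq_iff)
      have x: "of_real (w + dd D i) * X $ i = of_real (2*w) * (Fi - Ri)"
        using e2[of i p] e2[of i q] by (simp add: X_def Fi_def Ri_def cv_nth complex_eq_iff)
      have "of_real (w + dd D i) * X $ i = (1 - z) * (of_real (w - dd D i) * U $ i)"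
        using x u Ri by (simp add: algebra_simps)
      then have "cmod (of_real (w + dd D i) * X $ i) = cmod ((1 - z) * (of_real (w - dd D i) * U $ i))"
        by (simp only:)
      then have n1: "\<bar>w + dd D i\<bar> * cmod (X $ i) = cmod (1 - z) * (\<bar>w - dd D i\<bar> * cmod (U $ i))"
        by (simp only: norm_mult norm_of_real)
      have pos: "w - dd D i > 0" using w dd0[of i] by simp
      then have n2: "\<bar>w + dd D i\<bar> * cmod (X $ i) = (w - dd D i) * (cmod (1 - z) * cmod (U $ i))"
        using n1 by (simp add: mult_ac)
      have "\<bar>w + dd D i\<bar> \<le> \<alpha> * (w - dd D i)"
        using \<alpha>ge[of i] pos by (simp add: abs_divide divide_le_eq)
      then have "\<bar>w + dd D i\<bar> * cmod (X $ i) \<le> (\<alpha> * (w - dd D i)) * cmod (X $ i)"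
        by (rule mult_right_mono) simp
      then have "(w - dd D i) * (cmod (1 - z) * cmod (U $ i)) \<le> (w - dd D i) * (\<alpha> * cmod (X $ i))"
        using n2 by (simp add: mult_ac)
      then have "cmod (1 - z) * cmod (U $ i) \<le> \<alpha> * cmod (X $ i)" using pos by simp
      then show ?thesis by (simp add: norm_minus_commute)
    qed
    have "(cmod (z - 1))^2 * inner U U = (\<Sum>i\<in>UNIV. (cmod (z - 1) * cmod (U $ i))^2)"
      by (simp add: inner_cnorm sum_distrib_left power_mult_distrib)
    also have "\<dots> \<le> (\<Sum>i\<in>UNIV. (\<alpha> * cmod (X $ i))^2)"
      by (intro sum_mono power_mono comp) auto
    also have "\<dots> = \<alpha>^2 * inner X X"
      by (simp add: inner_cnorm sum_distrib_left power_mult_distrib)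
    also have "\<dots> \<le> \<alpha>^2 * (c * inner U U)"
      using Kmb[of p] Kmb[of q] by (intro mult_left_mono) (auto simp: X_def U_def inner_cv distrib_left)
    also have "\<dots> \<le> \<alpha>^2 * (\<beta>^2 * inner U U)"
      using c\<beta> by (intro mult_left_mono mult_right_mono) auto
    finally have ineq: "(cmod (z - 1))^2 * inner U U \<le> (\<alpha> * \<beta>)^2 * inner U U"
      by (simp add: power_mult_distrib mult_ac)
    have UU: "inner U U = inner (Kp *v p) (Kp *v p) + inner (Kp *v q) (Kp *v q)"
      by (simp add: U_def inner_cv)
    have UUpos: "inner U U > 0"
    proof (cases "p = 0")
      case True
      then have "q \<noteq> 0" using pq by simp
      then show ?thesis unfolding UU using Kpos[of q] by (simp add: add_nonneg_pos)
    next
      case False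
      then show ?thesis unfolding UU using Kpos[of p] by (simp add: add_pos_nonneg)
    qed
    have sq: "(cmod (z - 1))^2 \<le> (\<alpha> * \<beta>)^2"
      using ineq by (simp only: mult_le_cancel_right_pos[OF UUpos])
    have ab0: "0 \<le> \<alpha> * \<beta>" using \<alpha>0 \<beta>0 by (rule mult_nonneg_nonneg)
    have "cmod (z - 1) \<le> \<alpha> * \<beta>" by (rule power2_le_imp_le[OF sq ab0])
    then show ?thesis using sig by simp
  qed
  have FE: "FF \<omega> T D = F" by (simp add: F_def w_def)
  have RE: "RR T D = R" by (simp add: R_def)
  show ?thesis unfolding FE RE
  proof (intro conjI allI impI)
    fix z assume "complex_eigenvalue (matrix_inv F ** R) z"
    then show "cmod (z - 1) \<le> sigma \<omega> T D" by (rule eig)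
  next
    show "sigma \<omega> T D < 1" by (rule sig1)
  qed
qed

end
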